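(* Let $M$ be a manifold, $T$ a standard Borel space and $\Lambda$ a ($\sigma$-finite) measure on $T$, and let $M\times T$ be the product measurable lamination with leaves $M\times\{t\}$, with $\Lambda$ regarded as a transverse invariant measure. Then $\mathrm{Cat}(M\times T,\Lambda)=\mathrm{Cat}(M)\cdot\Lambda(T)$, where $\mathrm{Cat}(M)$ is the classical LS category of $M$.
   Context: $M\times T$ has the product $\sigma$-algebra and the product of the topology of $M$ with the discrete topology of $T$. A transverse invariant measure assigns to each transversal (measurable set meeting each leaf countably) a value, $\sigma$-additively and invariantly under measurable holonomy transformations; $\Lambda$ on $T$ induces one. $\widetilde\Lambda$ is its coherent extension (on $M\times T$, $\widetilde\Lambda(E)=\int_T\#(E\cap(M\times\{t\}))\,d\Lambda(t)$ for sets with $\sigma$-compact leaf intersections). For measurable open $U$, $\tau_\Lambda(U)=\inf\widetilde\Lambda(H(U\times\{1\}))$ over MT-maps (measurable, leafwise continuous) $H:U\times\mathbb{R}\to M\times T$ with $H(\cdot,0)$ the inclusion; $\mathrm{Cat}(M\times T,\Lambda)=\inf\sum_{U\in\mathcal{U}}\tau_\Lambda(U)$ over countable covers $\mathcal{U}$ by measurable open sets. *)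

theory Defs
  imports "HOL-Analysis.Analysis" "HOL-Probability.Probability"
begin

definition manifold :: "'a topology \<Rightarrow> bool" where
  "manifold X \<longleftrightarrow> Hausdorff_space X \<and> second_countable X \<and>
     (\<exists>n::nat. \<forall>x\<in>topspace X. \<exists>U V. openin X U \<and> x \<in> U \<and>
         openin (Euclidean_space n) V \<and>
         subtopology X U homeomorphic_space subtopology (Euclidean_space n) V)"

definition borel_of :: "'a topology \<Rightarrow> 'a measure" where
  "borel_of X = sigma (topspace X) {U. openin X U}"

definition standard_borel :: "'a measure \<Rightarrow> bool" where
  "standard_borel T \<longleftrightarrow> (\<exists>\<tau>. completely_metrizable_space \<tau> \<and> separable_space \<tau> \<and>
      topspace \<tau> = space T \<and> sets (borel_of \<tau>) = sets T)"

definition contractible_in :: "'a topology \<Rightarrow> 'a set \<Rightarrow> bool" where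
  "contractible_in X U \<longleftrightarrow> U \<subseteq> topspace X \<and>
     (\<exists>c\<in>topspace X. homotopic_with (\<lambda>_. True) (subtopology X U) X id (\<lambda>_. c))"

definition LS_cat :: "'a topology \<Rightarrow> ennreal" where
  "LS_cat X = (INF \<U> \<in> {\<U>. finite \<U> \<and> (\<forall>U\<in>\<U>. openin X U \<and> contractible_in X U)
                          \<and> \<Union>\<U> = topspace X}. of_nat (card \<U>))"

definition prod_lam_meas :: "'a topology \<Rightarrow> 'b measure \<Rightarrow> ('a \<times> 'b) measure" where
  "prod_lam_meas X \<Lambda> = borel_of X \<Otimes>\<^sub>M \<Lambda>"

definition prod_lam_top :: "'a topology \<Rightarrow> 'b measure \<Rightarrow> ('a \<times> 'b) topology" where
  "prod_lam_top X \<Lambda> = prod_topology X (discrete_topology (space \<Lambda>))"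

definition meas_open :: "'a topology \<Rightarrow> 'b measure \<Rightarrow> ('a \<times> 'b) set \<Rightarrow> bool" where
  "meas_open X \<Lambda> U \<longleftrightarrow> U \<in> sets (prod_lam_meas X \<Lambda>) \<and> openin (prod_lam_top X \<Lambda>) U"

definition leaf_count :: "('a \<times> 'b) set \<Rightarrow> 'b \<Rightarrow> ennreal" where
  "leaf_count E t = (if finite {x. (x, t) \<in> E} then of_nat (card {x. (x, t) \<in> E}) else \<infinity>)"

definition coh_ext :: "'b measure \<Rightarrow> ('a \<times> 'b) set \<Rightarrow> ennreal" where
  "coh_ext \<Lambda> E = (\<integral>\<^sup>+ t. leaf_count E t \<partial>\<Lambda>)"

definition MT_deformation ::
  "'a topology \<Rightarrow> 'b measure \<Rightarrow> ('a \<times> 'b) set \<Rightarrow> (('a \<times> 'b) \<times> real \<Rightarrow> 'a \<times> 'b) \<Rightarrow> bool" where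
  "MT_deformation X \<Lambda> U H \<longleftrightarrow>
     H \<in> measurable (restrict_space (prod_lam_meas X \<Lambda>) U \<Otimes>\<^sub>M borel) (prod_lam_meas X \<Lambda>) \<and>
     (\<forall>t\<in>space \<Lambda>. continuous_map
          (prod_topology (subtopology X {x. (x, t) \<in> U}) euclideanreal) (prod_lam_top X \<Lambda>)
          (\<lambda>(x, s). H ((x, t), s))) \<and>
     (\<forall>p\<in>U. H (p, 0) = p)"

definition tau_Lambda :: "'a topology \<Rightarrow> 'b measure \<Rightarrow> ('a \<times> 'b) set \<Rightarrow> ennreal" where
  "tau_Lambda X \<Lambda> U = (INF H \<in> {H. MT_deformation X \<Lambda> U H}. coh_ext \<Lambda> (H ` (U \<times> {1})))"

definition Cat_lam :: "'a topology \<Rightarrow> 'b measure \<Rightarrow> ennreal" where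
  "Cat_lam X \<Lambda> = (INF \<U> \<in> {\<U>. countable \<U> \<and> (\<forall>U\<in>\<U>. meas_open X \<Lambda> U)
                          \<and> \<Union>\<U> = topspace (prod_lam_top X \<Lambda>)}.
                      (\<Sum>\<^sub>\<infinity>U\<in>\<U>. tau_Lambda X \<Lambda> U))"

end

theory Submission
  imports Defs
begin


lemma space_borel_of[simp]: "space (borel_of X) = topspace X"
  unfolding borel_of_def by (rule space_measure_of) (auto dest: openin_subset)

lemma sets_borel_of: "sets (borel_of X) = sigma_sets (topspace X) {U. openin X U}"
  unfolding borel_of_def by (rule sets_measure_of) (auto dest: openin_subset)

lemma openin_borel_of: "openin X U \<Longrightarrow> U \<in> sets (borel_of X)"
  by (simp add: sets_borel_of sigma_sets.Basic)

lemma borel_of_euclidean: "borel_of (euclidean :: 'a::topological_space topology) = borel"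
  by (simp add: borel_of_def borel_def)

lemma continuous_map_measurable:
  assumes "continuous_map X Y f"
  shows "f \<in> borel_of X \<rightarrow>\<^sub>M borel_of Y"
  unfolding borel_of_def[of Y]
proof (rule measurable_measure_of)
  show "f \<in> space (borel_of X) \<rightarrow> topspace Y"
    using assms by (auto simp: continuous_map_def)
  show "{U. openin Y U} \<subseteq> Pow (topspace Y)" by (auto dest: openin_subset)
  fix A assume "A \<in> {U. openin Y U}"
  then have "openin X {x \<in> topspace X. f x \<in> A}"
    using assms openin_continuous_map_preimage by blast
  moreover have "f -` A \<inter> space (borel_of X) = {x \<in> topspace X. f x \<in> A}" by auto
  ultimately show "f -` A \<inter> space (borel_of X) \<in> sets (borel_of X)"
    by (simp add: openin_borel_of)
qed

lemma second_countable_euclidean: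
  "second_countable (euclidean :: 'a::second_countable_topology topology)"
proof -
  obtain \<B> :: "'a set set" where B: "countable \<B>" "\<And>C. C \<in> \<B> \<Longrightarrow> open C"
       "\<And>S. open S \<Longrightarrow> \<exists>U. U \<subseteq> \<B> \<and> S = \<Union>U"
    using univ_second_countable by blast
  show ?thesis
    unfolding second_countable_def
  proof (intro exI conjI)
    show "\<forall>U x. openin euclidean U \<and> x \<in> U \<longrightarrow> (\<exists>V\<in>\<B>. x \<in> V \<and> V \<subseteq> U)"
    proof (intro allI impI)
      fix U :: "'a set" and x assume "openin euclidean U \<and> x \<in> U"
      then obtain W where "W \<subseteq> \<B>" "U = \<Union>W" "x \<in> U" using B(3) by auto
      then show "\<exists>V\<in>\<B>. x \<in> V \<and> V \<subseteq> U" by blast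
    qed
  qed (use B in auto)
qed

lemma second_countableE:
  assumes "second_countable X"
  obtains B where "countable B" "\<And>V. V \<in> B \<Longrightarrow> openin X V"
    "\<And>U x. openin X U \<Longrightarrow> x \<in> U \<Longrightarrow> (\<exists>V \<in> B. x \<in> V \<and> V \<subseteq> U)"
proof -
  obtain B where B: "countable B" "\<forall>V \<in> B. openin X V"
             "\<forall>U x. openin X U \<and> x \<in> U \<longrightarrow> (\<exists>V \<in> B. x \<in> V \<and> V \<subseteq> U)"
    using assms unfolding second_countable_def by (elim exE conjE)
  show ?thesis by (rule that[OF B(1)]) (use B in auto)
qed

lemma prod_open_meas:
  assumes X: "second_countable X" and Y: "second_countable Y"
    and W: "openin (prod_topology X Y) W"
  shows "W \<in> sets (borel_of X \<Otimes>\<^sub>M borel_of Y)"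
proof -
  obtain BX where BX: "countable BX" "\<And>V. V \<in> BX \<Longrightarrow> openin X V"
    "\<And>U x. openin X U \<Longrightarrow> x \<in> U \<Longrightarrow> (\<exists>V \<in> BX. x \<in> V \<and> V \<subseteq> U)"
    using second_countableE[OF X] by blast
  obtain BY where BY: "countable BY" "\<And>V. V \<in> BY \<Longrightarrow> openin Y V"
    "\<And>U x. openin Y U \<Longrightarrow> x \<in> U \<Longrightarrow> (\<exists>V \<in> BY. x \<in> V \<and> V \<subseteq> U)"
    using second_countableE[OF Y] by blast
  define K where "K = {p \<in> BX \<times> BY. fst p \<times> snd p \<subseteq> W}"
  have cK: "countable K"
    by (rule countable_subset[of _ "BX \<times> BY"]) (use BX(1) BY(1) K_def in auto)
  have "W = (\<Union>p\<in>K. fst p \<times> snd p)"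
  proof
    show "(\<Union>p\<in>K. fst p \<times> snd p) \<subseteq> W" unfolding K_def by blast
    show "W \<subseteq> (\<Union>p\<in>K. fst p \<times> snd p)"
    proof
      fix p assume "p \<in> W"
      then obtain x y where p: "p = (x,y)" "(x,y) \<in> W" by (cases p) auto
      have Wall: "\<forall>x y. (x,y) \<in> W \<longrightarrow> (\<exists>U V. openin X U \<and> openin Y V \<and> x \<in> U \<and> y \<in> V \<and> U \<times> V \<subseteq> W)"
        using W by (simp only: openin_prod_topology_alt)
      have "\<exists>U V. openin X U \<and> openin Y V \<and> x \<in> U \<and> y \<in> V \<and> U \<times> V \<subseteq> W"
        using Wall p(2) by blast
      then obtain U V where UV: "openin X U" "openin Y V" "x \<in> U" "y \<in> V" "U \<times> V \<subseteq> W"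
        by (elim exE conjE)
      obtain A where A: "A \<in> BX" "x \<in> A" "A \<subseteq> U" using BX(3) UV by blast
      obtain B where B: "B \<in> BY" "y \<in> B" "B \<subseteq> V" using BY(3) UV by blast
      have "(A,B) \<in> K" unfolding K_def using A B UV(5) by auto
      moreover have "p \<in> A \<times> B" using p A B by simp
      ultimately show "p \<in> (\<Union>p\<in>K. fst p \<times> snd p)" by force
    qed
  qed
  moreover have "(\<Union>p\<in>K. fst p \<times> snd p) \<in> sets (borel_of X \<Otimes>\<^sub>M borel_of Y)"
  proof (rule sets.countable_UN'[OF cK])
    show "(\<lambda>p. fst p \<times> snd p) ` K \<subseteq> sets (borel_of X \<Otimes>\<^sub>M borel_of Y)"
    proof
      fix Z assume "Z \<in> (\<lambda>p. fst p \<times> snd p) ` K"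
      then obtain A B where "A \<in> BX" "B \<in> BY" "Z = A \<times> B" unfolding K_def by auto
      then show "Z \<in> sets (borel_of X \<Otimes>\<^sub>M borel_of Y)"
        using BX(2) BY(2) by (simp add: pair_measureI openin_borel_of)
    qed
  qed
  ultimately show ?thesis by simp
qed

lemma continuous_map_prod_measurable:
  assumes X: "second_countable X" and Y: "second_countable Y"
    and f: "continuous_map (prod_topology X Y) Z f"
  shows "f \<in> (borel_of X \<Otimes>\<^sub>M borel_of Y) \<rightarrow>\<^sub>M borel_of Z"
  unfolding borel_of_def[of Z]
proof (rule measurable_measure_of)
  show "f \<in> space (borel_of X \<Otimes>\<^sub>M borel_of Y) \<rightarrow> topspace Z"
    using f by (auto simp: continuous_map_def space_pair_measure)
  show "{U. openin Z U} \<subseteq> Pow (topspace Z)" by (auto dest: openin_subset)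
  fix A assume "A \<in> {U. openin Z U}"
  then have "openin (prod_topology X Y) {x \<in> topspace (prod_topology X Y). f x \<in> A}"
    using f openin_continuous_map_preimage by blast
  moreover have "f -` A \<inter> space (borel_of X \<Otimes>\<^sub>M borel_of Y) = {x \<in> topspace (prod_topology X Y). f x \<in> A}"
    by (auto simp: space_pair_measure)
  ultimately show "f -` A \<inter> space (borel_of X \<Otimes>\<^sub>M borel_of Y) \<in> sets (borel_of X \<Otimes>\<^sub>M borel_of Y)"
    using prod_open_meas[OF X Y] by simp
qed




lemma topspace_prod_lam_top[simp]: "topspace (prod_lam_top X \<Lambda>) = topspace X \<times> space \<Lambda>"
  by (simp add: prod_lam_top_def)

lemma cont_ident: "continuous_map X X (\<lambda>x. x)"
  using continuous_map_id[unfolded id_def] .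

lemma slice_openin:
  assumes U: "openin (prod_lam_top X \<Lambda>) U" and t: "t \<in> space \<Lambda>"
  shows "openin X {x. (x,t) \<in> U}"
proof -
  have c: "continuous_map X (prod_lam_top X \<Lambda>) (\<lambda>x. (x,t))"
    unfolding prod_lam_top_def using t by (intro continuous_map_pairedI) (auto simp: cont_ident)
  have "openin X {x \<in> topspace X. (x,t) \<in> U}" using openin_continuous_map_preimage[OF c U] .
  moreover have "{x \<in> topspace X. (x,t) \<in> U} = {x. (x,t) \<in> U}"
    using openin_subset[OF U] by auto
  ultimately show ?thesis by simp
qed

lemma MT_leafwise:
  assumes H: "MT_deformation X \<Lambda> U H" and t: "t \<in> space \<Lambda>"
  shows "continuous_map (prod_topology (subtopology X {x. (x,t) \<in> U}) euclideanreal) (prod_lam_top X \<Lambda>)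
           (\<lambda>(x,s). H((x,t),s))"
  using H t unfolding MT_deformation_def by blast

lemma MT_zero: "MT_deformation X \<Lambda> U H \<Longrightarrow> p \<in> U \<Longrightarrow> H (p,0) = p"
  unfolding MT_deformation_def by blast

lemma MT_meas: "MT_deformation X \<Lambda> U H \<Longrightarrow>
   H \<in> restrict_space (prod_lam_meas X \<Lambda>) U \<Otimes>\<^sub>M borel \<rightarrow>\<^sub>M prod_lam_meas X \<Lambda>"
  unfolding MT_deformation_def by blast

lemma MT_leaf_pres:
  assumes H: "MT_deformation X \<Lambda> U H" and U: "openin (prod_lam_top X \<Lambda>) U"
    and xt: "(x,t) \<in> U" and t: "t \<in> space \<Lambda>"
  shows "snd (H((x,t),s)) = t"
proof -
  let ?Ut = "{x. (x,t) \<in> U}"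
  have x: "x \<in> topspace X" using openin_subset[OF U] xt by auto
  have c1: "continuous_map euclideanreal (prod_topology (subtopology X ?Ut) euclideanreal) (\<lambda>s. (x,s))"
    using x xt by (intro continuous_map_pairedI) (auto simp: cont_ident)
  have "continuous_map euclideanreal (prod_lam_top X \<Lambda>) ((\<lambda>(x,s). H((x,t),s)) \<circ> (\<lambda>s. (x,s)))"
    by (rule continuous_map_compose[OF c1 MT_leafwise[OF H t]])
  then have "continuous_map euclideanreal (discrete_topology (space \<Lambda>)) (snd \<circ> ((\<lambda>(x,s). H((x,t),s)) \<circ> (\<lambda>s. (x,s))))"
    unfolding prod_lam_top_def by (rule continuous_map_compose) (rule continuous_map_snd)
  then have c: "continuous_map euclideanreal (discrete_topology (space \<Lambda>)) (\<lambda>s. snd (H((x,t),s)))"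
    by (simp add: o_def)
  have "connectedin (discrete_topology (space \<Lambda>)) ((\<lambda>s. snd (H((x,t),s))) ` topspace euclideanreal)"
    by (rule connectedin_continuous_map_image[OF c]) simp
  then obtain a where a: "(\<lambda>s. snd (H((x,t),s))) ` UNIV \<subseteq> {a}"
    by (auto simp: connectedin_discrete_topology)
  have "snd (H((x,t),s)) = a" "snd (H((x,t),0)) = a" using a by auto
  moreover have "snd (H((x,t),0)) = t" using MT_zero[OF H xt] by simp
  ultimately show ?thesis by simp
qed

lemma MT_fst_cont:
  assumes H: "MT_deformation X \<Lambda> U H" and t: "t \<in> space \<Lambda>"
  shows "continuous_map (prod_topology (subtopology X {x. (x,t) \<in> U}) euclideanreal) X
           (\<lambda>(x,s). fst (H((x,t),s)))"
proof -
  have "continuous_map (prod_topology (subtopology X {x. (x,t) \<in> U}) euclideanreal) X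
           (fst \<circ> (\<lambda>(x,s). H((x,t),s)))"
    using continuous_map_compose[OF MT_leafwise[OF H t, unfolded prod_lam_top_def] continuous_map_fst] .
  moreover have "fst \<circ> (\<lambda>(x,s). H((x,t),s)) = (\<lambda>(x,s). fst (H((x,t),s)))" by (auto simp: fun_eq_iff)
  ultimately show ?thesis by simp
qed

lemma MT_time_cont:
  assumes H: "MT_deformation X \<Lambda> U H" and t: "t \<in> space \<Lambda>"
  shows "continuous_map (subtopology X {x. (x,t) \<in> U}) X (\<lambda>x. fst (H((x,t),r)))"
proof -
  have c1: "continuous_map (subtopology X {x. (x,t) \<in> U}) (prod_topology (subtopology X {x. (x,t) \<in> U}) euclideanreal) (\<lambda>x. (x,r))"
    by (intro continuous_map_pairedI) (auto simp: cont_ident)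
  show ?thesis using continuous_map_compose[OF c1 MT_fst_cont[OF H t]] by (simp add: o_def)
qed

lemma section_sets:
  assumes U: "U \<in> sets (prod_lam_meas X \<Lambda>)" and d: "d \<in> topspace X"
  shows "{t \<in> space \<Lambda>. (d,t) \<in> U} \<in> sets \<Lambda>"
proof -
  have "Pair d \<in> \<Lambda> \<rightarrow>\<^sub>M borel_of X \<Otimes>\<^sub>M \<Lambda>" by (rule measurable_Pair1') (simp add: d)
  from measurable_sets[OF this, of U] U have "Pair d -` U \<inter> space \<Lambda> \<in> sets \<Lambda>"
    by (simp add: prod_lam_meas_def)
  moreover have "Pair d -` U \<inter> space \<Lambda> = {t \<in> space \<Lambda>. (d,t) \<in> U}" by auto
  ultimately show ?thesis by simp
qed

lemma MT_F_meas:
  assumes H: "MT_deformation X \<Lambda> U H" and d: "d \<in> topspace X"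
  shows "(\<lambda>t. fst (H((d,t),r))) \<in> restrict_space \<Lambda> {t \<in> space \<Lambda>. (d,t) \<in> U} \<rightarrow>\<^sub>M borel_of X"
proof -
  have m1: "Pair d \<in> restrict_space \<Lambda> {t \<in> space \<Lambda>. (d,t) \<in> U} \<rightarrow>\<^sub>M restrict_space (prod_lam_meas X \<Lambda>) U"
    unfolding prod_lam_meas_def
    by (rule measurable_restrict_space3[OF measurable_Pair1']) (auto simp: d)
  have m2: "(\<lambda>t. ((d,t),r)) \<in> restrict_space \<Lambda> {t \<in> space \<Lambda>. (d,t) \<in> U} \<rightarrow>\<^sub>M restrict_space (prod_lam_meas X \<Lambda>) U \<Otimes>\<^sub>M borel"
    by (rule measurable_Pair[OF m1]) simp
  have m3: "fst \<in> prod_lam_meas X \<Lambda> \<rightarrow>\<^sub>M borel_of X"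
    unfolding prod_lam_meas_def by (rule measurable_fst)
  show ?thesis
    using measurable_comp[OF measurable_comp[OF m2 MT_meas[OF H]] m3] by (simp add: o_def)
qed

lemma diag_compl_open:
  assumes "Hausdorff_space X"
  shows "openin (prod_topology X X) {p \<in> topspace X \<times> topspace X. fst p \<noteq> snd p}"
  unfolding openin_prod_topology_alt
proof (intro allI impI)
  fix x y assume "(x,y) \<in> {p \<in> topspace X \<times> topspace X. fst p \<noteq> snd p}"
  then have "x \<in> topspace X" "y \<in> topspace X" "x \<noteq> y" by auto
  then obtain U V where UV: "openin X U" "openin X V" "x \<in> U" "y \<in> V" "disjnt U V"
    using assms unfolding Hausdorff_space_def by blast
  have "U \<times> V \<subseteq> {p \<in> topspace X \<times> topspace X. fst p \<noteq> snd p}"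
    using UV openin_subset[OF UV(1)] openin_subset[OF UV(2)] by (auto simp: disjnt_def)
  then show "\<exists>U V. openin X U \<and> openin X V \<and> x \<in> U \<and> y \<in> V \<and> U \<times> V \<subseteq> {p \<in> topspace X \<times> topspace X. fst p \<noteq> snd p}"
    using UV by blast
qed

lemma neq_sets:
  assumes XH: "Hausdorff_space X" and XS: "second_countable X"
    and H: "MT_deformation X \<Lambda> U H" and U: "U \<in> sets (prod_lam_meas X \<Lambda>)"
    and d: "d \<in> topspace X" and d': "d' \<in> topspace X"
  shows "{t \<in> space \<Lambda>. (d,t) \<in> U \<and> (d',t) \<in> U \<and> fst (H((d,t),r)) \<noteq> fst (H((d',t),r))} \<in> sets \<Lambda>"
proof -
  define A where "A = {t \<in> space \<Lambda>. (d,t) \<in> U \<and> (d',t) \<in> U}"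
  have "A = {t \<in> space \<Lambda>. (d,t) \<in> U} \<inter> {t \<in> space \<Lambda>. (d',t) \<in> U}" unfolding A_def by auto
  then have A: "A \<in> sets \<Lambda>" using section_sets[OF U d] section_sets[OF U d'] by simp
  define G where "G = (\<lambda>t. (fst (H((d,t),r)), fst (H((d',t),r))))"
  have G: "G \<in> restrict_space \<Lambda> A \<rightarrow>\<^sub>M borel_of X \<Otimes>\<^sub>M borel_of X"
    unfolding G_def
    by (rule measurable_Pair; rule measurable_restrict_mono[OF MT_F_meas[OF H]]) (auto simp: A_def d d')
  have O: "{p \<in> topspace X \<times> topspace X. fst p \<noteq> snd p} \<in> sets (borel_of X \<Otimes>\<^sub>M borel_of X)"
    by (rule prod_open_meas[OF XS XS diag_compl_open[OF XH]])
  have "G -` {p \<in> topspace X \<times> topspace X. fst p \<noteq> snd p} \<inter> space (restrict_space \<Lambda> A) \<in> sets (restrict_space \<Lambda> A)"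
    by (rule measurable_sets[OF G O])
  moreover have "A \<inter> space \<Lambda> \<in> sets \<Lambda>" using A by (simp add: A_def)
  ultimately have S: "G -` {p \<in> topspace X \<times> topspace X. fst p \<noteq> snd p} \<inter> space (restrict_space \<Lambda> A) \<in> sets \<Lambda>"
    using sets_restrict_space_iff by blast
  have sp: "\<And>t. t \<in> A \<Longrightarrow> G t \<in> topspace X \<times> topspace X"
    using measurable_space[OF G] by (auto simp: space_pair_measure space_restrict_space A_def)
  have "G -` {p \<in> topspace X \<times> topspace X. fst p \<noteq> snd p} \<inter> space (restrict_space \<Lambda> A)
        = {t \<in> space \<Lambda>. (d,t) \<in> U \<and> (d',t) \<in> U \<and> fst (H((d,t),r)) \<noteq> fst (H((d',t),r))}"
    using sp by (auto simp: space_restrict_space A_def G_def)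
  with S show ?thesis by simp
qed




definition EE :: "'b measure \<Rightarrow> ('a \<times> 'b) set \<Rightarrow> (('a \<times> 'b) \<times> real \<Rightarrow> 'a \<times> 'b) \<Rightarrow> (nat \<Rightarrow> 'a) \<Rightarrow> nat \<Rightarrow> 'b set" where
  "EE \<Lambda> U H e n = {t \<in> space \<Lambda>. (e n, t) \<in> U \<and>
      (\<forall>m<n. (e m, t) \<in> U \<longrightarrow> fst (H((e m,t),1)) \<noteq> fst (H((e n,t),1)))}"

definition hh :: "'b measure \<Rightarrow> ('a \<times> 'b) set \<Rightarrow> (('a \<times> 'b) \<times> real \<Rightarrow> 'a \<times> 'b) \<Rightarrow> (nat \<Rightarrow> 'a) \<Rightarrow> 'b \<Rightarrow> ennreal" where
  "hh \<Lambda> U H e t = (\<Sum>n. indicator (EE \<Lambda> U H e n) t)"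

lemma EE_sets:
  assumes XH: "Hausdorff_space X" and XS: "second_countable X"
    and H: "MT_deformation X \<Lambda> U H" and U: "U \<in> sets (prod_lam_meas X \<Lambda>)"
    and e: "range e \<subseteq> topspace X"
  shows "EE \<Lambda> U H e n \<in> sets \<Lambda>"
proof -
  define A where "A = (\<lambda>m. {t \<in> space \<Lambda>. (e m,t) \<in> U})"
  define N where "N = (\<lambda>m. {t \<in> space \<Lambda>. (e m,t) \<in> U \<and> (e n,t) \<in> U \<and> fst (H((e m,t),1)) \<noteq> fst (H((e n,t),1))})"
  have A: "A m \<in> sets \<Lambda>" for m unfolding A_def using section_sets[OF U] e by auto
  have N: "N m \<in> sets \<Lambda>" for m unfolding N_def by (rule neq_sets[OF XH XS H U]) (use e in auto)
  have eq: "EE \<Lambda> U H e n = A n - (\<Union>m\<in>{..<n}. (A m \<inter> A n) - N m)"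
    unfolding EE_def A_def N_def by auto
  show ?thesis unfolding eq using A N by (intro sets.Diff sets.finite_UN) auto
qed

lemma hh_meas:
  assumes XH: "Hausdorff_space X" and XS: "second_countable X"
    and H: "MT_deformation X \<Lambda> U H" and U: "U \<in> sets (prod_lam_meas X \<Lambda>)"
    and e: "range e \<subseteq> topspace X"
  shows "hh \<Lambda> U H e \<in> borel_measurable \<Lambda>"
  unfolding hh_def
  by (rule borel_measurable_suminf_order, rule borel_measurable_indicator, rule EE_sets[OF XH XS H U e])

lemma suminf_indicator_count:
  "(\<Sum>n. indicator (E n) t :: ennreal) = emeasure (count_space UNIV) {n. t \<in> E n}"
proof -
  have "(\<Sum>n. indicator (E n) t :: ennreal) = (\<Sum>n. indicator {n. t \<in> E n} n)"
    by (simp add: indicator_def)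
  also have "\<dots> = (\<integral>\<^sup>+ n. indicator {n. t \<in> E n} n \<partial>count_space UNIV)"
    by (simp add: nn_integral_count_space_nat)
  also have "\<dots> = emeasure (count_space UNIV) {n. t \<in> E n}"
    by (rule nn_integral_indicator) simp
  finally show ?thesis .
qed

lemma hh_count:
  "hh \<Lambda> U H e t = (if finite {n. t \<in> EE \<Lambda> U H e n} then of_nat (card {n. t \<in> EE \<Lambda> U H e n}) else \<infinity>)"
  unfolding hh_def suminf_indicator_count by (simp add: emeasure_count_space)

lemma hh_le_leaf_count:
  assumes H: "MT_deformation X \<Lambda> U H" and U: "openin (prod_lam_top X \<Lambda>) U"
  shows "hh \<Lambda> U H e t \<le> leaf_count (H ` (U \<times> {1})) t"
proof -
  define I where "I = {n. t \<in> EE \<Lambda> U H e n}"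
  define S where "S = {x. (x, t) \<in> H ` (U \<times> {1})}"
  define \<phi> where "\<phi> = (\<lambda>n. fst (H((e n,t),1)))"
  show ?thesis
  proof (cases "finite S")
    case False
    then show ?thesis by (simp add: leaf_count_def S_def)
  next
    case True
    have IS: "\<phi> ` I \<subseteq> S"
    proof
      fix y assume "y \<in> \<phi> ` I"
      then obtain n where n: "n \<in> I" "y = \<phi> n" by blast
      then have t: "t \<in> space \<Lambda>" and u: "(e n, t) \<in> U" unfolding I_def EE_def by auto
      have "snd (H((e n,t),1)) = t" by (rule MT_leaf_pres[OF H U u t])
      then have "H((e n,t),1) = (y, t)" using n(2) unfolding \<phi>_def by (metis prod.collapse)
      moreover have "((e n,t),1) \<in> U \<times> {1}" using u by simp
      ultimately show "y \<in> S" unfolding S_def by (metis image_eqI mem_Collect_eq)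
    qed
    have inj: "inj_on \<phi> I"
    proof (rule inj_onI)
      fix m n assume mn: "m \<in> I" "n \<in> I" "\<phi> m = \<phi> n"
      show "m = n"
      proof (rule ccontr)
        assume "m \<noteq> n"
        then consider "m < n" | "n < m" by linarith
        then show False
        proof cases
          case 1
          then show False using mn unfolding I_def EE_def \<phi>_def by auto
        next
          case 2
          then show False using mn unfolding I_def EE_def \<phi>_def by auto
        qed
      qed
    qed
    have finI: "finite I"
      using finite_imageD[OF finite_subset[OF IS True] inj] .
    have "card I \<le> card S"
      using card_inj_on_le[OF inj IS True] .
    then show ?thesis
      using True finI unfolding hh_count leaf_count_def I_def[symmetric] S_def[symmetric] by simp
  qed
qed




lemma key_single_a:
  assumes XH: "Hausdorff_space X"
    and dense: "X closure_of range e = topspace X" and e: "range e \<subseteq> topspace X"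
    and H: "MT_deformation X \<Lambda> U H" and U: "openin (prod_lam_top X \<Lambda>) U"
    and t: "t \<in> space \<Lambda>" and fin: "finite {n. t \<in> EE \<Lambda> U H e n}"
    and xt: "(x,t) \<in> U"
  shows "fst (H((x,t),1)) \<in> (\<lambda>n. fst (H((e n,t),1))) ` {n. t \<in> EE \<Lambda> U H e n}"
proof -
  define I where "I = {n. t \<in> EE \<Lambda> U H e n}"
  define f where "f = (\<lambda>x. fst (H((x,t),1)))"
  define Fin where "Fin = (\<lambda>n. f (e n)) ` I"
  define Ut where "Ut = {x. (x,t) \<in> U}"
  have step1: "f (e m) \<in> Fin" if m: "(e m, t) \<in> U" for m
  proof -
    define k where "k = (LEAST k. (e k, t) \<in> U \<and> f (e k) = f (e m))"
    have k: "(e k, t) \<in> U \<and> f (e k) = f (e m)"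
      unfolding k_def by (rule LeastI[of _ m]) (use m in auto)
    have "\<not> ((e j, t) \<in> U \<and> f (e j) = f (e m))" if "j < k" for j
      using not_less_Least[OF that[unfolded k_def]] unfolding k_def .
    then have "k \<in> I" using k t unfolding I_def EE_def f_def by auto
    moreover have "f (e m) = f (e k)" using k by simp
    ultimately show ?thesis unfolding Fin_def by blast
  qed
  have cf: "continuous_map (subtopology X Ut) X f"
    unfolding f_def Ut_def by (rule MT_time_cont[OF H t])
  have Ut: "openin X Ut" unfolding Ut_def by (rule slice_openin[OF U t])
  have finF: "finite Fin" unfolding Fin_def I_def using fin by simp
  have FinX: "Fin \<subseteq> topspace X"
  proof
    fix y assume "y \<in> Fin"
    then obtain n where "n \<in> I" "y = f (e n)" unfolding Fin_def by blast
    then have "e n \<in> topspace (subtopology X Ut)" using e unfolding I_def EE_def Ut_def by auto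
    then show "y \<in> topspace X" using cf \<open>y = f (e n)\<close> by (auto simp: continuous_map_def)
  qed
  have cl: "closedin X Fin" by (rule closedin_Hausdorff_finite[OF XH FinX finF])
  show ?thesis
  proof (rule ccontr)
    assume nx: "\<not> ?thesis"
    define W where "W = {y \<in> topspace (subtopology X Ut). f y \<in> topspace X - Fin}"
    have "openin (subtopology X Ut) W"
      unfolding W_def by (rule openin_continuous_map_preimage[OF cf]) (use cl in auto)
    then have W: "openin X W" using Ut by (rule openin_trans_full)
    have "x \<in> topspace X" using xt openin_subset[OF U] by auto
    moreover have "f x \<in> topspace X"
      using cf xt \<open>x \<in> topspace X\<close> unfolding Ut_def by (auto simp: continuous_map_def)
    ultimately have "x \<in> W" using nx xt unfolding W_def Ut_def Fin_def f_def I_def by auto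
    then have "range e \<inter> W \<noteq> {}" using dense W unfolding dense_intersects_open by blast
    then obtain m where "e m \<in> W" by blast
    then have "(e m, t) \<in> U" "f (e m) \<notin> Fin" unfolding W_def Ut_def by auto
    then show False using step1 by blast
  qed
qed

lemma key_single_b:
  assumes XH: "Hausdorff_space X"
    and dense: "X closure_of range e = topspace X" and e: "range e \<subseteq> topspace X"
    and H: "MT_deformation X \<Lambda> U H" and U: "openin (prod_lam_top X \<Lambda>) U"
    and t: "t \<in> space \<Lambda>" and fin: "finite {n. t \<in> EE \<Lambda> U H e n}"
    and p: "p \<in> (\<lambda>n. fst (H((e n,t),1))) ` {n. t \<in> EE \<Lambda> U H e n}"
  shows "openin X {x. (x,t) \<in> U \<and> fst (H((x,t),1)) = p} \<and> contractible_in X {x. (x,t) \<in> U \<and> fst (H((x,t),1)) = p}"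
proof -
  define I where "I = {n. t \<in> EE \<Lambda> U H e n}"
  define f where "f = (\<lambda>x. fst (H((x,t),1)))"
  define Fin where "Fin = (\<lambda>n. f (e n)) ` I"
  define Ut where "Ut = {x. (x,t) \<in> U}"
  define V where "V = {x. (x,t) \<in> U \<and> f x = p}"
  have a: "f x \<in> Fin" if "(x,t) \<in> U" for x
    using key_single_a[OF XH dense e H U t fin that] unfolding Fin_def f_def I_def .
  have cf: "continuous_map (subtopology X Ut) X f"
    unfolding f_def Ut_def by (rule MT_time_cont[OF H t])
  have Ut: "openin X Ut" unfolding Ut_def by (rule slice_openin[OF U t])
  have UtX: "Ut \<subseteq> topspace X" using openin_subset[OF Ut] .
  have finF: "finite Fin" unfolding Fin_def I_def using fin by simp
  have FinX: "Fin \<subseteq> topspace X"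
  proof
    fix y assume "y \<in> Fin"
    then obtain n where "n \<in> I" "y = f (e n)" unfolding Fin_def by blast
    then have "e n \<in> topspace (subtopology X Ut)" using e unfolding I_def EE_def Ut_def by auto
    then show "y \<in> topspace X" using cf \<open>y = f (e n)\<close> by (auto simp: continuous_map_def)
  qed
  have pF: "p \<in> Fin" using p unfolding Fin_def f_def I_def .
  have pX: "p \<in> topspace X" using pF FinX by blast
  have cl: "closedin X (Fin - {p})" by (rule closedin_Hausdorff_finite[OF XH]) (use FinX finF in auto)
  have Veq: "V = {y \<in> topspace (subtopology X Ut). f y \<in> topspace X - (Fin - {p})}"
  proof
    show "V \<subseteq> {y \<in> topspace (subtopology X Ut). f y \<in> topspace X - (Fin - {p})}"
      using UtX pX unfolding V_def Ut_def by auto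
    show "{y \<in> topspace (subtopology X Ut). f y \<in> topspace X - (Fin - {p})} \<subseteq> V"
      using a unfolding V_def Ut_def by auto
  qed
  have "openin (subtopology X Ut) V"
    unfolding Veq by (rule openin_continuous_map_preimage[OF cf]) (use cl in auto)
  then have Vo: "openin X V" using Ut by (rule openin_trans_full)
  have VUt: "V \<subseteq> Ut" unfolding V_def Ut_def by auto
  have VX: "V \<subseteq> topspace X" using VUt UtX by blast
  have "homotopic_with (\<lambda>_. True) (subtopology X V) X id (\<lambda>_. p)"
  proof (subst homotopic_with, simp, intro exI conjI ballI)
    define g where "g = (\<lambda>(s::real, x). fst (H((x,t),s)))"
    have c_snd: "continuous_map (prod_topology (top_of_set {0..1::real}) (subtopology X V)) (subtopology X Ut) snd"
    proof -
      have "continuous_map (prod_topology (top_of_set {0..1::real}) (subtopology X V)) X snd"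
        using continuous_map_compose[OF continuous_map_snd continuous_map_id_subt] by (simp add: o_def id_def)
      then show ?thesis using VUt by (auto simp: continuous_map_in_subtopology)
    qed
    have c_fst: "continuous_map (prod_topology (top_of_set {0..1::real}) (subtopology X V)) euclideanreal fst"
      using continuous_map_compose[OF continuous_map_fst continuous_map_id_subt] by (simp add: o_def id_def)
    have csw: "continuous_map (prod_topology (top_of_set {0..1::real}) (subtopology X V))
                 (prod_topology (subtopology X Ut) euclideanreal) (\<lambda>z. (snd z, fst z))"
      by (rule continuous_map_pairedI[OF c_snd c_fst])
    have "continuous_map (prod_topology (top_of_set {0..1::real}) (subtopology X V)) X
            ((\<lambda>(x,s). fst (H((x,t),s))) \<circ> (\<lambda>z. (snd z, fst z)))"
      by (rule continuous_map_compose[OF csw MT_fst_cont[OF H t, folded Ut_def]])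
    moreover have "(\<lambda>(x,s). fst (H((x,t),s))) \<circ> (\<lambda>z. (snd z, fst z)) = g"
      unfolding g_def by (auto simp: fun_eq_iff)
    ultimately show "continuous_map (prod_topology (top_of_set {0..1::real}) (subtopology X V)) X g" by simp
    fix x assume x: "x \<in> topspace (subtopology X V)"
    then have xU: "(x,t) \<in> U" unfolding V_def by auto
    show "g (0, x) = id x" unfolding g_def using MT_zero[OF H xU] by simp
    show "g (1, x) = p" unfolding g_def using x unfolding V_def f_def by auto
  qed auto
  then have "contractible_in X V" unfolding contractible_in_def using VX pX by blast
  then show ?thesis using Vo unfolding V_def f_def by simp
qed




lemma infsum_ennreal_SUP:
  "(\<Sum>\<^sub>\<infinity>x\<in>A. (f x :: ennreal)) = (SUP F\<in>{F. finite F \<and> F \<subseteq> A}. sum f F)"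
  by (rule nonneg_infsum_complete) simp

lemma infsum_ennreal_finite_le:
  assumes "finite F" "F \<subseteq> A"
  shows "sum f F \<le> (\<Sum>\<^sub>\<infinity>x\<in>A. (f x :: ennreal))"
  unfolding infsum_ennreal_SUP using assms by (intro SUP_upper) auto

lemma infsum_ennreal_subset_le:
  assumes "B \<subseteq> A"
  shows "(\<Sum>\<^sub>\<infinity>x\<in>B. (f x :: ennreal)) \<le> (\<Sum>\<^sub>\<infinity>x\<in>A. f x)"
  unfolding infsum_ennreal_SUP using assms by (intro SUP_subset_mono) auto

lemma pointwise_bound:
  assumes XH: "Hausdorff_space X"
    and dense: "X closure_of range e = topspace X" and e: "range e \<subseteq> topspace X"
    and UU: "\<And>U. U \<in> \<U> \<Longrightarrow> openin (prod_lam_top X \<Lambda>) U"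
    and cover: "\<Union>\<U> = topspace (prod_lam_top X \<Lambda>)"
    and HH: "\<And>U. U \<in> \<U> \<Longrightarrow> MT_deformation X \<Lambda> U (HH U)"
    and t: "t \<in> space \<Lambda>"
  shows "LS_cat X \<le> (\<Sum>\<^sub>\<infinity>U\<in>\<U>. hh \<Lambda> U (HH U) e t)"
proof -
  define g where "g = (\<lambda>U. hh \<Lambda> U (HH U) e t)"
  define S where "S = (\<Sum>\<^sub>\<infinity>U\<in>\<U>. g U)"
  show ?thesis
  proof (cases "S = \<infinity>")
    case True
    then show ?thesis unfolding S_def g_def by simp
  next
    case Sfin: False
    define I where "I = (\<lambda>U. {n. t \<in> EE \<Lambda> U (HH U) e n})"
    have finI: "finite (I U)" if U: "U \<in> \<U>" for U
    proof (rule ccontr)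
      assume "infinite (I U)"
      then have "g U = \<infinity>" unfolding g_def I_def hh_count by simp
      moreover have "sum g {U} \<le> S" unfolding S_def by (rule infsum_ennreal_finite_le) (use U in auto)
      ultimately show False using Sfin by (simp add: top_unique)
    qed
    have gI: "g U = of_nat (card (I U))" if "U \<in> \<U>" for U
      using finI[OF that] unfolding g_def I_def hh_count by simp
    define \<U>' where "\<U>' = {U \<in> \<U>. I U \<noteq> {}}"
    have fin': "finite \<U>'"
    proof (rule ccontr)
      assume inf: "infinite \<U>'"
      have "(\<Sum>\<^sub>\<infinity>U\<in>\<U>'. g U) = \<infinity>"
      proof (rule infsum_superconst_infinite_ennreal[OF _ _ inf])
        fix U assume U: "U \<in> \<U>'"
        then have "card (I U) \<ge> 1" using finI unfolding \<U>'_def by (auto simp: Suc_le_eq card_gt_0_iff)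
        then show "g U \<ge> 1" using gI U unfolding \<U>'_def by simp
      qed simp
      moreover have "(\<Sum>\<^sub>\<infinity>U\<in>\<U>'. g U) \<le> S" unfolding S_def by (rule infsum_ennreal_subset_le) (auto simp: \<U>'_def)
      ultimately show False using Sfin by (simp add: top_unique)
    qed
    define Fin where "Fin = (\<lambda>U. (\<lambda>n. fst (HH U ((e n,t),1))) ` I U)"
    define V where "V = (\<lambda>U p. {x. (x,t) \<in> U \<and> fst (HH U ((x,t),1)) = p})"
    define \<V> where "\<V> = (\<Union>U\<in>\<U>'. V U ` Fin U)"
    have finFin: "finite (Fin U)" if "U \<in> \<U>" for U unfolding Fin_def using finI[OF that] by simp
    have fin\<V>: "finite \<V>" unfolding \<V>_def using fin' finFin by (auto simp: \<U>'_def)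
    have Vprop: "openin X W \<and> contractible_in X W" if Wv: "W \<in> \<V>" for W
    proof -
      obtain U p where U: "U \<in> \<U>" and p: "p \<in> Fin U" and W: "W = V U p"
        using Wv unfolding \<V>_def \<U>'_def by blast
      show ?thesis unfolding W V_def
        by (rule key_single_b[OF XH dense e HH[OF U] UU[OF U] t finI[OF U, unfolded I_def]])
           (use p in \<open>simp add: Fin_def I_def\<close>)
    qed
    have cov: "\<Union>\<V> = topspace X"
    proof
      show "\<Union>\<V> \<subseteq> topspace X" using Vprop openin_subset by blast
      show "topspace X \<subseteq> \<Union>\<V>"
      proof
        fix x assume x: "x \<in> topspace X"
        then have "(x,t) \<in> \<Union>\<U>" using cover t by simp
        then obtain U where U: "U \<in> \<U>" and xt: "(x,t) \<in> U" by blast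
        have a: "fst (HH U ((x,t),1)) \<in> Fin U"
          using key_single_a[OF XH dense e HH[OF U] UU[OF U] t finI[OF U, unfolded I_def] xt]
          unfolding Fin_def I_def .
        then have "I U \<noteq> {}" unfolding Fin_def by auto
        then have "U \<in> \<U>'" using U unfolding \<U>'_def by simp
        moreover have "x \<in> V U (fst (HH U ((x,t),1)))" unfolding V_def using xt by simp
        ultimately show "x \<in> \<Union>\<V>" unfolding \<V>_def using a by blast
      qed
    qed
    have "LS_cat X \<le> of_nat (card \<V>)"
      unfolding LS_cat_def by (rule INF_lower) (use fin\<V> Vprop cov in auto)
    also have "card \<V> \<le> (\<Sum>U\<in>\<U>'. card (V U ` Fin U))"
      unfolding \<V>_def by (rule card_UN_le[OF fin'])
    also have "\<dots> \<le> (\<Sum>U\<in>\<U>'. card (I U))"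
    proof (rule sum_mono)
      fix U assume "U \<in> \<U>'"
      have "card (V U ` Fin U) \<le> card (Fin U)" by (rule card_image_le) (use finFin \<open>U \<in> \<U>'\<close> \<U>'_def in auto)
      also have "card (Fin U) \<le> card (I U)" unfolding Fin_def by (rule card_image_le) (use finI \<open>U \<in> \<U>'\<close> \<U>'_def in auto)
      finally show "card (V U ` Fin U) \<le> card (I U)" .
    qed
    finally have "LS_cat X \<le> of_nat (\<Sum>U\<in>\<U>'. card (I U))" by (simp add: of_nat_mono)
    also have "\<dots> = (\<Sum>U\<in>\<U>'. g U)" using gI unfolding \<U>'_def by (simp add: of_nat_sum)
    also have "\<dots> \<le> S" unfolding S_def by (rule infsum_ennreal_finite_le[OF fin']) (auto simp: \<U>'_def)
    finally show ?thesis unfolding S_def g_def .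
  qed
qed




lemma infsum_nat_suminf_ennreal:
  "(\<Sum>\<^sub>\<infinity>n\<in>(UNIV::nat set). (f n :: ennreal)) = (\<Sum>n. f n)"
proof (rule antisym)
  show "(\<Sum>\<^sub>\<infinity>n\<in>(UNIV::nat set). f n) \<le> (\<Sum>n. f n)"
    unfolding infsum_ennreal_SUP
  proof (rule SUP_least)
    fix F :: "nat set" assume "F \<in> {F. finite F \<and> F \<subseteq> UNIV}"
    then have fin: "finite F" by simp
    have "F \<subseteq> {..<Suc (Max (insert 0 F))}"
      using fin by (auto simp: less_Suc_eq_le)
    then have "sum f F \<le> sum f {..<Suc (Max (insert 0 F))}"
      by (intro sum_mono2) auto
    also have "\<dots> \<le> (\<Sum>n. f n)" by (rule sum_le_suminf) auto
    finally show "sum f F \<le> (\<Sum>n. f n)" .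
  qed
  show "(\<Sum>n. f n) \<le> (\<Sum>\<^sub>\<infinity>n\<in>(UNIV::nat set). f n)"
    unfolding suminf_eq_SUP by (rule SUP_least) (rule infsum_ennreal_finite_le, auto)
qed

lemma nn_integral_infsum_le:
  assumes A: "countable A" and f: "\<And>a. a \<in> A \<Longrightarrow> f a \<in> borel_measurable M"
  shows "(\<integral>\<^sup>+ x. (\<Sum>\<^sub>\<infinity>a\<in>A. (f a x :: ennreal)) \<partial>M) \<le> (\<Sum>\<^sub>\<infinity>a\<in>A. (\<integral>\<^sup>+ x. f a x \<partial>M))"
proof (cases "finite A")
  case True
  then show ?thesis using f by (simp add: infsum_finite nn_integral_sum)
next
  case False
  define g where "g = from_nat_into A"
  have bij: "bij_betw g UNIV A" unfolding g_def by (rule bij_betw_from_nat_into[OF A False])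
  have gA: "g n \<in> A" for n using bij by (auto simp: bij_betw_def)
  have eq1: "(\<Sum>\<^sub>\<infinity>a\<in>A. h a) = (\<Sum>n. h (g n))" for h :: "_ \<Rightarrow> ennreal"
  proof -
    have "(\<Sum>\<^sub>\<infinity>a\<in>A. h a) = (\<Sum>\<^sub>\<infinity>n\<in>UNIV. h (g n))"
      using infsum_reindex_bij_betw[OF bij, of h] by simp
    also have "\<dots> = (\<Sum>n. h (g n))" by (rule infsum_nat_suminf_ennreal)
    finally show ?thesis .
  qed
  have "(\<integral>\<^sup>+ x. (\<Sum>\<^sub>\<infinity>a\<in>A. f a x) \<partial>M) = (\<integral>\<^sup>+ x. (\<Sum>n. f (g n) x) \<partial>M)"
    by (simp add: eq1)
  also have "\<dots> = (\<Sum>n. \<integral>\<^sup>+ x. f (g n) x \<partial>M)"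
    by (rule nn_integral_suminf) (use f gA in auto)
  also have "\<dots> = (\<Sum>\<^sub>\<infinity>a\<in>A. (\<integral>\<^sup>+ x. f a x \<partial>M))" by (simp add: eq1)
  finally show ?thesis by simp
qed

lemma geom_sum_real: "(\<Sum>k<N. (\<epsilon>::real) / 2^(k+1)) = \<epsilon> - \<epsilon> / 2^N"
  by (induction N) (simp_all add: field_simps)

lemma eps_infsum_le:
  assumes A: "countable A" and e: "0 < (\<epsilon>::real)"
  shows "(\<Sum>\<^sub>\<infinity>a\<in>A. ennreal (\<epsilon> / 2^(to_nat_on A a + 1))) \<le> ennreal \<epsilon>"
  unfolding infsum_ennreal_SUP
proof (rule SUP_least)
  fix F assume "F \<in> {F. finite F \<and> F \<subseteq> A}"
  then have F: "finite F" "F \<subseteq> A" by auto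
  have inj: "inj_on (to_nat_on A) F"
    using inj_on_to_nat_on[OF A] F(2) by (rule inj_on_subset)
  have "(\<Sum>a\<in>F. ennreal (\<epsilon> / 2^(to_nat_on A a + 1))) = ennreal (\<Sum>a\<in>F. \<epsilon> / 2^(to_nat_on A a + 1))"
    using e by (intro sum_ennreal) simp
  also have "(\<Sum>a\<in>F. \<epsilon> / 2^(to_nat_on A a + 1)) = (\<Sum>k\<in>to_nat_on A ` F. \<epsilon> / 2^(k + 1))"
    using sum.reindex[OF inj, of "\<lambda>k. \<epsilon> / 2^(k + 1)"] by simp
  also have "\<dots> \<le> (\<Sum>k<Suc (Max (insert 0 (to_nat_on A ` F))). \<epsilon> / 2^(k + 1))"
    by (rule sum_mono2) (use F e in \<open>auto simp: less_Suc_eq_le\<close>)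
  also have "\<dots> \<le> \<epsilon>" unfolding geom_sum_real using e by simp
  finally show "(\<Sum>a\<in>F. ennreal (\<epsilon> / 2^(to_nat_on A a + 1))) \<le> ennreal \<epsilon>"
    by (simp add: ennreal_leI)
qed




lemma LS_cat_empty: "topspace X = {} \<Longrightarrow> LS_cat X = 0"
proof -
  assume "topspace X = {}"
  then have "LS_cat X \<le> of_nat (card ({} :: 'a set set))"
    unfolding LS_cat_def by (intro INF_lower) auto
  then show "LS_cat X = 0" by simp
qed

lemma lower_bound:
  assumes XH: "Hausdorff_space X" and XS: "second_countable X"
    and cU: "countable \<U>" and mo: "\<And>U. U \<in> \<U> \<Longrightarrow> meas_open X \<Lambda> U"
    and cover: "\<Union>\<U> = topspace (prod_lam_top X \<Lambda>)"
  shows "LS_cat X * emeasure \<Lambda> (space \<Lambda>) \<le> (\<Sum>\<^sub>\<infinity>U\<in>\<U>. tau_Lambda X \<Lambda> U)"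
proof (cases "topspace X = {}")
  case True
  then show ?thesis by (simp add: LS_cat_empty)
next
  case False
  obtain C where C: "countable C" "C \<subseteq> topspace X" "X closure_of C = topspace X"
    using second_countable_imp_separable_space[OF XS] unfolding separable_space_def by blast
  have Cne: "C \<noteq> {}"
  proof
    assume "C = {}"
    then have "topspace X = {}" using C(3) by (metis closure_of_empty)
    then show False using False by blast
  qed
  define e where "e = from_nat_into C"
  have re: "range e = C" unfolding e_def by (rule range_from_nat_into[OF Cne C(1)])
  have e: "range e \<subseteq> topspace X" using re C by simp
  have dense: "X closure_of range e = topspace X" using re C by simp
  have UU: "openin (prod_lam_top X \<Lambda>) U" if "U \<in> \<U>" for U using mo[OF that] unfolding meas_open_def by blast
  have US: "U \<in> sets (prod_lam_meas X \<Lambda>)" if "U \<in> \<U>" for U using mo[OF that] unfolding meas_open_def by blast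
  let ?S = "(\<Sum>\<^sub>\<infinity>U\<in>\<U>. tau_Lambda X \<Lambda> U)"
  show ?thesis
  proof (rule ennreal_le_epsilon)
    fix \<epsilon> :: real assume Sfin: "?S < \<top>" and eps: "0 < \<epsilon>"
    define \<delta> where "\<delta> = (\<lambda>U. ennreal (\<epsilon> / 2^(to_nat_on \<U> U + 1)))"
    have ex: "\<exists>H. MT_deformation X \<Lambda> U H \<and> coh_ext \<Lambda> (H ` (U \<times> {1})) < tau_Lambda X \<Lambda> U + \<delta> U"
      if U: "U \<in> \<U>" for U
    proof -
      have "sum (tau_Lambda X \<Lambda>) {U} \<le> ?S" by (rule infsum_ennreal_finite_le) (use U in auto)
      then have "tau_Lambda X \<Lambda> U < \<top>" using Sfin by simp
      moreover have "0 < \<delta> U" unfolding \<delta>_def using eps by simp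
      ultimately have "tau_Lambda X \<Lambda> U < tau_Lambda X \<Lambda> U + \<delta> U" by simp
      then show ?thesis unfolding tau_Lambda_def[of X \<Lambda> U] by (simp add: INF_less_iff)
    qed
    obtain HH where HH: "\<And>U. U \<in> \<U> \<Longrightarrow> MT_deformation X \<Lambda> U (HH U) \<and>
         coh_ext \<Lambda> (HH U ` (U \<times> {1})) < tau_Lambda X \<Lambda> U + \<delta> U"
      using ex by metis
    have "LS_cat X * emeasure \<Lambda> (space \<Lambda>) = (\<integral>\<^sup>+ t. LS_cat X \<partial>\<Lambda>)" by simp
    also have "\<dots> \<le> (\<integral>\<^sup>+ t. (\<Sum>\<^sub>\<infinity>U\<in>\<U>. hh \<Lambda> U (HH U) e t) \<partial>\<Lambda>)"
      by (rule nn_integral_mono, rule pointwise_bound[OF XH dense e UU cover]) (use HH in auto)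
    also have "\<dots> \<le> (\<Sum>\<^sub>\<infinity>U\<in>\<U>. (\<integral>\<^sup>+ t. hh \<Lambda> U (HH U) e t \<partial>\<Lambda>))"
      by (rule nn_integral_infsum_le[OF cU]) (use hh_meas[OF XH XS _ US e] HH in auto)
    also have "\<dots> \<le> (\<Sum>\<^sub>\<infinity>U\<in>\<U>. tau_Lambda X \<Lambda> U + \<delta> U)"
    proof (rule infsum_mono)
      fix U assume U: "U \<in> \<U>"
      have "(\<integral>\<^sup>+ t. hh \<Lambda> U (HH U) e t \<partial>\<Lambda>) \<le> coh_ext \<Lambda> (HH U ` (U \<times> {1}))"
        unfolding coh_ext_def by (rule nn_integral_mono, rule hh_le_leaf_count) (use HH U UU in auto)
      also have "\<dots> \<le> tau_Lambda X \<Lambda> U + \<delta> U" using HH[OF U] by (simp add: less_imp_le)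
      finally show "(\<integral>\<^sup>+ t. hh \<Lambda> U (HH U) e t \<partial>\<Lambda>) \<le> tau_Lambda X \<Lambda> U + \<delta> U" .
    qed (simp_all add: nonneg_summable_on_complete)
    also have "\<dots> = ?S + (\<Sum>\<^sub>\<infinity>U\<in>\<U>. \<delta> U)" by (rule infsum_add) (simp_all add: nonneg_summable_on_complete)
    also have "\<dots> \<le> ?S + ennreal \<epsilon>"
      unfolding \<delta>_def by (intro add_left_mono eps_infsum_le[OF cU eps])
    finally show "LS_cat X * emeasure \<Lambda> (space \<Lambda>) \<le> ?S + ennreal \<epsilon>" .
  qed
qed




lemma cont_clamp: "continuous_map euclideanreal (top_of_set {0..1::real}) (\<lambda>s. max 0 (min 1 s))"
proof -
  have "continuous_map euclideanreal euclideanreal (\<lambda>s::real. max 0 (min 1 s))"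
    by (intro continuous_intros)
  then show ?thesis by (auto simp: continuous_map_in_subtopology)
qed

lemma fst_to_subtop:
  assumes V: "openin X V"
  shows "fst \<in> restrict_space (borel_of X \<Otimes>\<^sub>M \<Lambda>) (V \<times> space \<Lambda>) \<rightarrow>\<^sub>M borel_of (subtopology X V)"
  unfolding borel_of_def[of "subtopology X V"]
proof (rule measurable_measure_of)
  show "fst \<in> space (restrict_space (borel_of X \<Otimes>\<^sub>M \<Lambda>) (V \<times> space \<Lambda>)) \<rightarrow> topspace (subtopology X V)"
    by (auto simp: space_restrict_space space_pair_measure)
  show "{U. openin (subtopology X V) U} \<subseteq> Pow (topspace (subtopology X V))"
    using openin_subset[of "subtopology X V"] by blast
  fix A assume "A \<in> {U. openin (subtopology X V) U}"
  then obtain T where T: "openin X T" "A = T \<inter> V" by (auto simp: openin_subtopology)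
  have eq: "fst -` A \<inter> space (restrict_space (borel_of X \<Otimes>\<^sub>M \<Lambda>) (V \<times> space \<Lambda>)) = (T \<inter> V) \<times> space \<Lambda>"
    using T openin_subset[OF V] by (auto simp: space_restrict_space space_pair_measure)
  have W: "(V \<times> space \<Lambda>) \<inter> space (borel_of X \<Otimes>\<^sub>M \<Lambda>) \<in> sets (borel_of X \<Otimes>\<^sub>M \<Lambda>)"
  proof -
    have "(V \<times> space \<Lambda>) \<inter> space (borel_of X \<Otimes>\<^sub>M \<Lambda>) = V \<times> space \<Lambda>"
      using openin_subset[OF V] by (auto simp: space_pair_measure)
    then show ?thesis using V by (simp add: pair_measureI openin_borel_of)
  qed
  have "(T \<inter> V) \<times> space \<Lambda> \<in> sets (borel_of X \<Otimes>\<^sub>M \<Lambda>)"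
    using T V by (intro pair_measureI openin_borel_of openin_Int) auto
  then have "(T \<inter> V) \<times> space \<Lambda> \<in> sets (restrict_space (borel_of X \<Otimes>\<^sub>M \<Lambda>) (V \<times> space \<Lambda>))"
    using sets_restrict_space_iff[OF W] by auto
  then show "fst -` A \<inter> space (restrict_space (borel_of X \<Otimes>\<^sub>M \<Lambda>) (V \<times> space \<Lambda>))
        \<in> sets (restrict_space (borel_of X \<Otimes>\<^sub>M \<Lambda>) (V \<times> space \<Lambda>))" unfolding eq .
qed

lemma tau_contractible:
  assumes XS: "second_countable X" and V: "openin X V" and cV: "contractible_in X V"
  shows "tau_Lambda X \<Lambda> (V \<times> space \<Lambda>) \<le> emeasure \<Lambda> (space \<Lambda>)"
proof -
  obtain p h where p: "p \<in> topspace X"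
    and ch: "continuous_map (prod_topology (top_of_set {0..1::real}) (subtopology X V)) X h"
    and h0: "\<And>x. h (0, x) = x" and h1: "\<And>x. h (1, x) = p"
    using cV unfolding contractible_in_def homotopic_with_def by (auto simp: id_def)
  define cl where "cl = (\<lambda>s::real. max 0 (min 1 s))"
  define g where "g = (\<lambda>(s, x). h (cl s, x))"
  define H where "H = (\<lambda>((x::'a, t::'b), s::real). (g (s, x), t))"
  define W where "W = V \<times> space \<Lambda>"
  have cg: "continuous_map (prod_topology euclideanreal (subtopology X V)) X g"
  proof -
    have c1: "continuous_map (prod_topology euclideanreal (subtopology X V))
            (prod_topology (top_of_set {0..1::real}) (subtopology X V)) (\<lambda>z. (cl (fst z), snd z))"
      unfolding cl_def
      by (intro continuous_map_pairedI continuous_map_compose[OF continuous_map_fst cont_clamp, unfolded o_def]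
            continuous_map_snd)
    have "continuous_map (prod_topology euclideanreal (subtopology X V)) X (h \<circ> (\<lambda>z. (cl (fst z), snd z)))"
      by (rule continuous_map_compose[OF c1 ch])
    moreover have "h \<circ> (\<lambda>z. (cl (fst z), snd z)) = g" unfolding g_def by (auto simp: fun_eq_iff)
    ultimately show ?thesis by simp
  qed
  have gm: "g \<in> borel \<Otimes>\<^sub>M borel_of (subtopology X V) \<rightarrow>\<^sub>M borel_of X"
    using continuous_map_prod_measurable[OF second_countable_euclidean second_countable_subtopology[OF XS] cg]
    by (simp add: borel_of_euclidean)
  have MT: "MT_deformation X \<Lambda> W H"
    unfolding MT_deformation_def
  proof (intro conjI ballI)
    have psi: "(\<lambda>z. (snd z, fst (fst z))) \<in> restrict_space (prod_lam_meas X \<Lambda>) W \<Otimes>\<^sub>M borel \<rightarrow>\<^sub>M borel \<Otimes>\<^sub>M borel_of (subtopology X V)"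
    proof (rule measurable_Pair)
      show "(\<lambda>z. snd z) \<in> restrict_space (prod_lam_meas X \<Lambda>) W \<Otimes>\<^sub>M borel \<rightarrow>\<^sub>M borel" by simp
      show "(\<lambda>z. fst (fst z)) \<in> restrict_space (prod_lam_meas X \<Lambda>) W \<Otimes>\<^sub>M borel \<rightarrow>\<^sub>M borel_of (subtopology X V)"
        using measurable_comp[OF measurable_fst fst_to_subtop[OF V, of \<Lambda>]]
        unfolding prod_lam_meas_def W_def by (simp add: o_def)
    qed
    have m1: "(\<lambda>z. g (snd z, fst (fst z))) \<in> restrict_space (prod_lam_meas X \<Lambda>) W \<Otimes>\<^sub>M borel \<rightarrow>\<^sub>M borel_of X"
      using measurable_comp[OF psi gm] by (simp add: o_def)
    have m2: "(\<lambda>z. snd (fst z)) \<in> restrict_space (prod_lam_meas X \<Lambda>) W \<Otimes>\<^sub>M borel \<rightarrow>\<^sub>M \<Lambda>"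
    proof -
      have "snd \<in> restrict_space (prod_lam_meas X \<Lambda>) W \<rightarrow>\<^sub>M \<Lambda>"
        unfolding prod_lam_meas_def by (rule measurable_restrict_space1) simp
      then show ?thesis using measurable_comp[OF measurable_fst] by (simp add: o_def)
    qed
    have "(\<lambda>z. (g (snd z, fst (fst z)), snd (fst z))) \<in> restrict_space (prod_lam_meas X \<Lambda>) W \<Otimes>\<^sub>M borel \<rightarrow>\<^sub>M prod_lam_meas X \<Lambda>"
      unfolding prod_lam_meas_def by (rule measurable_Pair[OF m1[unfolded prod_lam_meas_def] m2[unfolded prod_lam_meas_def]])
    moreover have "(\<lambda>z. (g (snd z, fst (fst z)), snd (fst z))) = H" unfolding H_def by (auto simp: fun_eq_iff)
    ultimately show "H \<in> restrict_space (prod_lam_meas X \<Lambda>) W \<Otimes>\<^sub>M borel \<rightarrow>\<^sub>M prod_lam_meas X \<Lambda>" by simp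
  next
    fix t assume t: "t \<in> space \<Lambda>"
    have sl: "{x. (x, t) \<in> W} = V" unfolding W_def using t by auto
    have c1: "continuous_map (prod_topology (subtopology X V) euclideanreal) X (\<lambda>(x, s). g (s, x))"
    proof -
      have "continuous_map (prod_topology (subtopology X V) euclideanreal) (prod_topology euclideanreal (subtopology X V)) (\<lambda>z. (snd z, fst z))"
        by (intro continuous_map_pairedI continuous_map_snd continuous_map_fst)
      from continuous_map_compose[OF this cg] show ?thesis by (simp add: o_def case_prod_unfold)
    qed
    have "continuous_map (prod_topology (subtopology X V) euclideanreal) (prod_lam_top X \<Lambda>) (\<lambda>z. ((\<lambda>(x, s). g (s, x)) z, t))"
      unfolding prod_lam_top_def using t by (intro continuous_map_pairedI c1) auto
    moreover have "(\<lambda>z. ((\<lambda>(x, s). g (s, x)) z, t)) = (\<lambda>(x, s). H ((x, t), s))"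
      unfolding H_def by (auto simp: fun_eq_iff)
    ultimately show "continuous_map (prod_topology (subtopology X {x. (x, t) \<in> W}) euclideanreal) (prod_lam_top X \<Lambda>) (\<lambda>(x, s). H ((x, t), s))"
      unfolding sl by simp
  next
    fix q assume "q \<in> W"
    show "H (q, 0) = q" unfolding H_def g_def cl_def by (cases q) (simp add: h0)
  qed
  have lc: "leaf_count (H ` (W \<times> {1})) t \<le> 1" for t
  proof -
    have "{x. (x, t) \<in> H ` (W \<times> {1})} \<subseteq> {p}"
      unfolding H_def g_def cl_def by (auto simp: h1)
    then have "finite {x. (x, t) \<in> H ` (W \<times> {1})}" "card {x. (x, t) \<in> H ` (W \<times> {1})} \<le> 1"
      using finite_subset card_mono[of "{p}"] by fastforce+
    then show ?thesis unfolding leaf_count_def by simp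
  qed
  have "tau_Lambda X \<Lambda> W \<le> coh_ext \<Lambda> (H ` (W \<times> {1}))"
    unfolding tau_Lambda_def by (rule INF_lower) (use MT in simp)
  also have "\<dots> \<le> (\<integral>\<^sup>+ t. 1 \<partial>\<Lambda>)" unfolding coh_ext_def by (rule nn_integral_mono) (rule lc)
  also have "\<dots> = emeasure \<Lambda> (space \<Lambda>)" by simp
  finally show ?thesis unfolding W_def .
qed




lemma meas_open_box:
  assumes "openin X V"
  shows "meas_open X \<Lambda> (V \<times> space \<Lambda>)"
  unfolding meas_open_def prod_lam_meas_def prod_lam_top_def
  using assms by (auto intro!: pair_measureI openin_borel_of simp: openin_prod_Times_iff openin_discrete_topology)

lemma Cat_lam_le_cover:
  assumes XS: "second_countable X" and fin: "finite \<V>"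
    and VV: "\<And>V. V \<in> \<V> \<Longrightarrow> openin X V \<and> contractible_in X V" and cov: "\<Union>\<V> = topspace X"
  shows "Cat_lam X \<Lambda> \<le> of_nat (card \<V>) * emeasure \<Lambda> (space \<Lambda>)"
proof -
  define \<U> where "\<U> = (\<lambda>V. V \<times> space \<Lambda>) ` \<V>"
  have c1: "countable \<U>" unfolding \<U>_def using fin by (simp add: countable_finite)
  have c2: "\<forall>U\<in>\<U>. meas_open X \<Lambda> U" unfolding \<U>_def using VV meas_open_box by blast
  have c3: "\<Union>\<U> = topspace (prod_lam_top X \<Lambda>)" unfolding \<U>_def using cov by auto
  have "Cat_lam X \<Lambda> \<le> (\<Sum>\<^sub>\<infinity>U\<in>\<U>. tau_Lambda X \<Lambda> U)"
    unfolding Cat_lam_def by (rule INF_lower) (use c1 c2 c3 in blast)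
  also have "\<dots> = (\<Sum>U\<in>\<U>. tau_Lambda X \<Lambda> U)" unfolding \<U>_def using fin by (simp add: infsum_finite)
  also have "\<dots> \<le> (\<Sum>V\<in>\<V>. tau_Lambda X \<Lambda> (V \<times> space \<Lambda>))"
    unfolding \<U>_def using sum_image_le[OF fin, of "tau_Lambda X \<Lambda>" "\<lambda>V. V \<times> space \<Lambda>"] by (simp add: o_def)
  also have "\<dots> \<le> (\<Sum>V\<in>\<V>. emeasure \<Lambda> (space \<Lambda>))"
    by (rule sum_mono) (use VV tau_contractible[OF XS] in blast)
  also have "\<dots> = of_nat (card \<V>) * emeasure \<Lambda> (space \<Lambda>)" by simp
  finally show ?thesis .
qed

lemma MT_ident:
  assumes U: "openin (prod_lam_top X \<Lambda>) U"
  shows "MT_deformation X \<Lambda> U fst"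
  unfolding MT_deformation_def
proof (intro conjI ballI)
  show "fst \<in> restrict_space (prod_lam_meas X \<Lambda>) U \<Otimes>\<^sub>M borel \<rightarrow>\<^sub>M prod_lam_meas X \<Lambda>"
    using measurable_comp[OF measurable_fst measurable_restrict_space1[OF measurable_ident]]
    by (simp add: o_def id_def)
next
  fix t assume t: "t \<in> space \<Lambda>"
  have "continuous_map (prod_topology (subtopology X {x. (x, t) \<in> U}) euclideanreal) (prod_lam_top X \<Lambda>) (\<lambda>z. (fst z, t))"
    unfolding prod_lam_top_def using t
    by (intro continuous_map_pairedI continuous_map_compose[OF continuous_map_fst continuous_map_id_subt, unfolded o_def id_def]) auto
  moreover have eq: "(\<lambda>(x, s). fst ((x, t), s)) = (\<lambda>z. (fst z, t))" by (auto simp: fun_eq_iff)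
  ultimately show "continuous_map (prod_topology (subtopology X {x. (x, t) \<in> U}) euclideanreal) (prod_lam_top X \<Lambda>) (\<lambda>(x, s). fst ((x, t), s))"
    by (simp only: eq)
qed simp

lemma Cat_lam_null:
  assumes c: "emeasure \<Lambda> (space \<Lambda>) = 0"
  shows "Cat_lam X \<Lambda> = 0"
proof -
  define W where "W = topspace X \<times> space \<Lambda>"
  have Wo: "openin (prod_lam_top X \<Lambda>) W" unfolding W_def by (simp add: prod_lam_top_def openin_prod_Times_iff openin_discrete_topology)
  have "Cat_lam X \<Lambda> \<le> (\<Sum>\<^sub>\<infinity>U\<in>{W}. tau_Lambda X \<Lambda> U)"
    unfolding Cat_lam_def
    by (rule INF_lower) (auto simp: W_def meas_open_box)
  also have "\<dots> = tau_Lambda X \<Lambda> W" by simp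
  also have "\<dots> \<le> coh_ext \<Lambda> (fst ` (W \<times> {1::real}))"
    unfolding tau_Lambda_def by (rule INF_lower[where f="\<lambda>H. coh_ext \<Lambda> (H ` (W \<times> {1}))"]) (simp add: MT_ident[OF Wo])
  also have "\<dots> \<le> (\<integral>\<^sup>+ t. \<top> \<partial>\<Lambda>)" unfolding coh_ext_def by (rule nn_integral_mono) simp
  also have "\<dots> = 0" using c by simp
  finally show ?thesis by simp
qed

theorem mainTheorem18:
  fixes X :: "'a topology" and \<Lambda> :: "'b measure"
  assumes "manifold X"
    and "standard_borel \<Lambda>"
    and "sigma_finite_measure \<Lambda>"
  shows "Cat_lam X \<Lambda> = LS_cat X * emeasure \<Lambda> (space \<Lambda>)"
proof -
  have XH: "Hausdorff_space X" and XS: "second_countable X" using assms(1) unfolding manifold_def by blast+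
  let ?c = "emeasure \<Lambda> (space \<Lambda>)"
  have lb: "LS_cat X * ?c \<le> Cat_lam X \<Lambda>"
    unfolding Cat_lam_def by (rule INF_greatest) (rule lower_bound[OF XH XS], auto)
  have ub: "Cat_lam X \<Lambda> \<le> LS_cat X * ?c"
  proof (cases "?c = 0")
    case True
    then show ?thesis using Cat_lam_null[OF True] by simp
  next
    case cne: False
    define P where "P = (\<lambda>n. \<exists>\<V>. finite \<V> \<and> (\<forall>U\<in>\<V>. openin X U \<and> contractible_in X U) \<and> \<Union>\<V> = topspace X \<and> card \<V> = n)"
    show ?thesis
    proof (cases "\<exists>n. P n")
      case False
      then have "{\<U>. finite \<U> \<and> (\<forall>U\<in>\<U>. openin X U \<and> contractible_in X U) \<and> \<Union>\<U> = topspace X} = {}"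
        unfolding P_def by blast
      then have "LS_cat X = \<top>" unfolding LS_cat_def by simp
      then show ?thesis using cne by (simp add: ennreal_top_mult)
    next
      case True
      define N where "N = (LEAST n. P n)"
      have "P N" unfolding N_def using True by (rule LeastI_ex)
      then obtain \<V> where V: "finite \<V>" "\<forall>U\<in>\<V>. openin X U \<and> contractible_in X U" "\<Union>\<V> = topspace X" "card \<V> = N"
        unfolding P_def by blast
      have NL: "of_nat N \<le> LS_cat X"
        unfolding LS_cat_def
      proof (rule INF_greatest)
        fix \<U> assume "\<U> \<in> {\<U>. finite \<U> \<and> (\<forall>U\<in>\<U>. openin X U \<and> contractible_in X U) \<and> \<Union>\<U> = topspace X}"
        then have "P (card \<U>)" unfolding P_def by blast
        then have "N \<le> card \<U>" unfolding N_def by (rule Least_le)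
        then show "(of_nat N :: ennreal) \<le> of_nat (card \<U>)" by simp
      qed
      have "Cat_lam X \<Lambda> \<le> of_nat (card \<V>) * ?c"
        by (rule Cat_lam_le_cover[OF XS V(1) _ V(3)]) (use V(2) in blast)
      also have "\<dots> \<le> LS_cat X * ?c" using NL V(4) by (intro mult_right_mono) auto
      finally show ?thesis .
    qed
  qed
  show ?thesis using lb ub by (rule antisym[rotated])
qed


end
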